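(* For every integer $n\ge 2$, every integer $k\ge 0$ and every real $x$, $$W^{(k+2)}_{n}(x)=W^{(k)}_{n}(x)+(-2)^{n-1}(n+k+1)(n-2)!\,\sin^n(x)\,W^{(k+2)}_{n-1}(x).$$
   Context: For smooth functions $f_1,\dots,f_n$ of a real variable $x$, $\mathrm{Wr}\{f_1,\dots,f_n\}$ denotes the determinant of the $n\times n$ matrix with $(i,j)$ entry $f_j^{(i-1)}(x)$. For integers $k\ge0$ define $W^{(k)}_1(x):=\sin((k+1)x)$ and, for $n\ge 2$, $W^{(k)}_n(x):=\mathrm{Wr}\{\sin(x),\sin(2x),\dots,\sin((n-1)x),\sin((n+k)x)\}$. *)

theory Defs
  imports "HOL-Analysis.Derivative" "Jordan_Normal_Form.Determinant"
begin

definition Wr :: "(real \<Rightarrow> real) list \<Rightarrow> real \<Rightarrow> real" where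
  "Wr fs x = det (mat (length fs) (length fs) (\<lambda>(i, j). (deriv ^^ i) (fs ! j) x))"

definition W :: "nat \<Rightarrow> nat \<Rightarrow> real \<Rightarrow> real" where
  "W n k x = (if n = 1 then sin (real (k + 1) * x)
     else Wr (map (\<lambda>j. \<lambda>t. sin (real j * t)) [1..<n] @ [\<lambda>t. sin (real (n + k) * t)]) x)"

end

theory Submission imports Defs begin

definition csmooth :: "(real \<Rightarrow> real) \<Rightarrow> bool" where
  "csmooth f \<longleftrightarrow> (\<forall>i x. (deriv ^^ i) f differentiable (at x))"

lemma csmooth_hasder:
  assumes "csmooth f"
  shows "((deriv ^^ i) f has_real_derivative (deriv ^^ Suc i) f x) (at x)"
  using assms unfolding csmooth_def
  by (simp add: DERIV_deriv_iff_real_differentiable)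

lemma csmoothI:
  assumes "\<And>i x. \<exists>D. ((deriv ^^ i) f has_real_derivative D) (at x)"
  shows "csmooth f"
  unfolding csmooth_def using assms real_differentiable_def by blast

lemma higher_deriv_lin:
  assumes "finite A" "\<And>l. l \<in> A \<Longrightarrow> csmooth (f l)"
  shows "(deriv ^^ i) (\<lambda>t. \<Sum>l\<in>A. c l * f l t) = (\<lambda>t. \<Sum>l\<in>A. c l * (deriv ^^ i) (f l) t)"
proof (induction i)
  case 0
  then show ?case by simp
next
  case (Suc i)
  show ?case
  proof
    fix x
    have "((\<lambda>t. \<Sum>l\<in>A. c l * (deriv ^^ i) (f l) t) has_real_derivative
            (\<Sum>l\<in>A. c l * (deriv ^^ Suc i) (f l) x)) (at x)"
      by (intro DERIV_sum DERIV_cmult csmooth_hasder assms(2))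
    then show "(deriv ^^ Suc i) (\<lambda>t. \<Sum>l\<in>A. c l * f l t) x = (\<Sum>l\<in>A. c l * (deriv ^^ Suc i) (f l) x)"
      using Suc by (simp add: DERIV_imp_deriv)
  qed
qed

lemma csmooth_lin:
  assumes "finite A" "\<And>l. l \<in> A \<Longrightarrow> csmooth (f l)"
  shows "csmooth (\<lambda>t. \<Sum>l\<in>A. c l * f l t)"
proof (rule csmoothI)
  fix i x
  show "\<exists>D. ((deriv ^^ i) (\<lambda>t. \<Sum>l\<in>A. c l * f l t) has_real_derivative D) (at x)"
  proof -
    have "((\<lambda>t. \<Sum>l\<in>A. c l * (deriv ^^ i) (f l) t) has_real_derivative
            (\<Sum>l\<in>A. c l * (deriv ^^ Suc i) (f l) x)) (at x)"
      by (intro DERIV_sum DERIV_cmult csmooth_hasder assms(2))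
    then show ?thesis using higher_deriv_lin[OF assms, where i=i and c=c] by auto
  qed
qed

lemma Suc_choose': "Suc n choose k = (n choose k) + (if k = 0 then 0 else (n choose (k-1)))"
  by (cases k) simp_all

lemma sum_Suc_reindex':
  fixes f :: "nat \<Rightarrow> 'a::ab_group_add"
  shows "sum f {0..n} = f 0 - f (Suc n) + sum (\<lambda>i. f (Suc i)) {0..n}"
  by (induct n) auto

lemma pascal_sum:
  fixes a b :: "nat \<Rightarrow> real"
  shows "(\<Sum>i=0..n. real (n choose i) * (a (Suc i) * b (n-i) + a i * b (Suc (n-i)))) =
         (\<Sum>i=0..Suc n. real (Suc n choose i) * a i * b (Suc n - i))"
proof -
  have "(\<Sum>i=0..Suc n. real (Suc n choose i) * a i * b (Suc n - i)) =
        (\<Sum>i=0..Suc n. real (n choose i) * a i * b (Suc n - i)) +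
        (\<Sum>i=0..Suc n. real (if i = 0 then 0 else (n choose (i - 1))) * a i * b (Suc n - i))"
    by (simp add: Suc_choose' sum.distrib algebra_simps)
  also have "(\<Sum>i=0..Suc n. real (n choose i) * a i * b (Suc n - i)) =
             (\<Sum>i=0..n. real (n choose i) * a i * b (Suc (n - i)))"
    by (simp add: Suc_diff_le)
  also have "(\<Sum>i=0..Suc n. real (if i = 0 then 0 else (n choose (i - 1))) * a i * b (Suc n - i)) =
             (\<Sum>i=0..n. real (n choose i) * a (Suc i) * b (n - i))"
    by (subst sum.atLeast0_atMost_Suc_shift) simp
  finally show ?thesis by (simp add: sum.distrib algebra_simps)
qed

lemma leib_deriv:
  assumes f: "csmooth f" and g: "csmooth g"
  shows "((\<lambda>z. \<Sum>i = 0..n. real (n choose i) * (deriv ^^ i) f z * (deriv ^^ (n-i)) g z) has_real_derivative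
     (\<Sum>i=0..n. real (n choose i) * ((deriv ^^ Suc i) f z * (deriv ^^ (n-i)) g z + (deriv ^^ i) f z * (deriv ^^ Suc (n-i)) g z))) (at z)"
proof (rule DERIV_sum)
  fix i assume "i \<in> {0..n}"
  have "((\<lambda>z. real (n choose i) * ((deriv ^^ i) f z * (deriv ^^ (n-i)) g z)) has_real_derivative
     real (n choose i) * ((deriv ^^ Suc i) f z * (deriv ^^ (n-i)) g z + (deriv ^^ i) f z * (deriv ^^ Suc (n-i)) g z)) (at z)"
    using DERIV_cmult[OF DERIV_mult[OF csmooth_hasder[OF f, of i z] csmooth_hasder[OF g, of "n-i" z]], of "real (n choose i)"]
    by (simp only: algebra_simps)
  then show "((\<lambda>z. real (n choose i) * (deriv ^^ i) f z * (deriv ^^ (n-i)) g z) has_real_derivative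
     real (n choose i) * ((deriv ^^ Suc i) f z * (deriv ^^ (n-i)) g z + (deriv ^^ i) f z * (deriv ^^ Suc (n-i)) g z)) (at z)"
    by (simp add: mult.assoc)
qed

lemma higher_deriv_mult:
  assumes f: "csmooth f" and g: "csmooth g"
  shows "(deriv ^^ n) (\<lambda>w. f w * g w) =
           (\<lambda>z. \<Sum>i = 0..n. real (n choose i) * (deriv ^^ i) f z * (deriv ^^ (n-i)) g z)"
proof (induction n)
  case 0 then show ?case by simp
next
  case (Suc n)
  show ?case
  proof
    fix z
    have "(deriv ^^ Suc n) (\<lambda>w. f w * g w) z = deriv (\<lambda>z. \<Sum>i = 0..n. real (n choose i) * (deriv ^^ i) f z * (deriv ^^ (n-i)) g z) z"
      using Suc by simp
    also have "\<dots> = (\<Sum>i=0..n. real (n choose i) * ((deriv ^^ Suc i) f z * (deriv ^^ (n-i)) g z + (deriv ^^ i) f z * (deriv ^^ Suc (n-i)) g z))"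
      by (rule DERIV_imp_deriv[OF leib_deriv[OF f g]])
    also have "\<dots> = (\<Sum>i = 0..Suc n. real (Suc n choose i) * (deriv ^^ i) f z * (deriv ^^ (Suc n - i)) g z)"
      using pascal_sum[of n "\<lambda>i. (deriv ^^ i) f z" "\<lambda>i. (deriv ^^ i) g z"] by simp
    finally show "(deriv ^^ Suc n) (\<lambda>w. f w * g w) z = (\<Sum>i = 0..Suc n. real (Suc n choose i) * (deriv ^^ i) f z * (deriv ^^ (Suc n - i)) g z)" .
  qed
qed

lemma csmooth_mult:
  assumes f: "csmooth f" and g: "csmooth g"
  shows "csmooth (\<lambda>w. f w * g w)"
proof (rule csmoothI)
  fix i x
  show "\<exists>D. ((deriv ^^ i) (\<lambda>w. f w * g w) has_real_derivative D) (at x)"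
    unfolding higher_deriv_mult[OF assms] using leib_deriv[OF assms] by blast
qed


definition WM :: "(real \<Rightarrow> real) list \<Rightarrow> real \<Rightarrow> real mat" where
  "WM fs x = mat (length fs) (length fs) (\<lambda>(i, j). (deriv ^^ i) (fs ! j) x)"

lemma Wr_WM: "Wr fs x = det (WM fs x)"
  unfolding Wr_def WM_def ..

lemma WM_carrier: "WM fs x \<in> carrier_mat (length fs) (length fs)"
  unfolding WM_def by simp

lemma WM_index: "i < length fs \<Longrightarrow> j < length fs \<Longrightarrow> WM fs x $$ (i,j) = (deriv ^^ i) (fs ! j) x"
  unfolding WM_def by simp

lemma Wr_transform:
  assumes "length fs = n" "length gs = n" "T \<in> carrier_mat n n"
    "\<And>j. j < n \<Longrightarrow> gs ! j = (\<lambda>t. \<Sum>l<n. T $$ (l,j) * (fs ! l) t)"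
    "\<And>f. f \<in> set fs \<Longrightarrow> csmooth f"
  shows "Wr gs x = Wr fs x * det T"
proof -
  have sm: "\<And>l. l \<in> {..<n} \<Longrightarrow> csmooth (fs ! l)" using assms(1,5) by auto
  have "WM gs x = WM fs x * T"
  proof (rule eq_matI)
    fix i j assume i: "i < dim_row (WM fs x * T)" and j: "j < dim_col (WM fs x * T)"
    then have i': "i < n" and j': "j < n" using assms WM_carrier[of fs x] by auto
    have "WM gs x $$ (i,j) = (deriv ^^ i) (\<lambda>t. \<Sum>l<n. T $$ (l,j) * (fs ! l) t) x"
      using WM_index[of i gs j x] i' j' assms by simp
    also have "\<dots> = (\<Sum>l<n. T $$ (l,j) * (deriv ^^ i) (fs ! l) x)"
      using higher_deriv_lin[of "{..<n}" "\<lambda>l. fs ! l" i "\<lambda>l. T $$ (l,j)", OF _ sm] by simp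
    also have "\<dots> = (WM fs x * T) $$ (i,j)"
      using i' j' assms WM_carrier[of fs x]
      by (auto simp: index_mult_mat scalar_prod_def WM_index lessThan_atLeast0 mult.commute intro!: sum.cong)
    finally show "WM gs x $$ (i,j) = (WM fs x * T) $$ (i,j)" .
  qed (use assms in \<open>auto simp: WM_def\<close>)
  then show ?thesis
    using det_mult[OF WM_carrier[of fs x], of T] assms by (simp add: Wr_WM)
qed

lemma Wr_mult:
  assumes f: "csmooth f" and gs: "\<And>g. g \<in> set gs \<Longrightarrow> csmooth g"
  shows "Wr (map (\<lambda>g t. f t * g t) gs) x = f x ^ length gs * Wr gs x"
proof -
  define n where "n = length gs"
  define L where "L = mat n n (\<lambda>(i,l). if l \<le> i then real (i choose l) * (deriv ^^ (i-l)) f x else 0)"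
  have Lc: "L \<in> carrier_mat n n" unfolding L_def by simp
  have "WM (map (\<lambda>g t. f t * g t) gs) x = L * WM gs x"
  proof (rule eq_matI)
    fix i j assume i: "i < dim_row (L * WM gs x)" and j: "j < dim_col (L * WM gs x)"
    then have i': "i < n" and j': "j < n" using Lc WM_carrier[of gs x] n_def by auto
    have sg: "csmooth (gs ! j)" using gs j' n_def by auto
    have "WM (map (\<lambda>g t. f t * g t) gs) x $$ (i,j) = (deriv ^^ i) (\<lambda>t. (gs ! j) t * f t) x"
      using WM_index[of i "map (\<lambda>g t. f t * g t) gs" j x] i' j' n_def by (simp add: mult.commute)
    also have "\<dots> = (\<Sum>l = 0..i. real (i choose l) * (deriv ^^ l) (gs ! j) x * (deriv ^^ (i-l)) f x)"
      using higher_deriv_mult[OF sg f] by simp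
    also have "\<dots> = (\<Sum>l \<in> {0..<n}. L $$ (i,l) * (deriv ^^ l) (gs ! j) x)"
    proof -
      have "(\<Sum>l \<in> {0..<n}. L $$ (i,l) * (deriv ^^ l) (gs ! j) x) =
            (\<Sum>l \<in> {0..i}. L $$ (i,l) * (deriv ^^ l) (gs ! j) x)"
        by (rule sum.mono_neutral_right) (use i' in \<open>auto simp: L_def\<close>)
      also have "\<dots> = (\<Sum>l = 0..i. real (i choose l) * (deriv ^^ l) (gs ! j) x * (deriv ^^ (i-l)) f x)"
        using i' by (auto simp: L_def intro!: sum.cong)
      finally show ?thesis by simp
    qed
    also have "\<dots> = (L * WM gs x) $$ (i,j)"
      using i' j' Lc WM_carrier[of gs x] n_def
      by (auto simp: index_mult_mat scalar_prod_def WM_index intro!: sum.cong)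
    finally show "WM (map (\<lambda>g t. f t * g t) gs) x $$ (i,j) = (L * WM gs x) $$ (i,j)" .
  qed (use Lc WM_carrier n_def in \<open>auto simp: WM_def\<close>)
  moreover have "det L = f x ^ n"
  proof -
    have "det L = prod_list (diag_mat L)"
      by (rule det_lower_triangular[OF _ Lc]) (auto simp: L_def)
    also have "diag_mat L = replicate n (f x)"
      by (rule nth_equalityI) (auto simp: diag_mat_def L_def)
    finally show ?thesis by simp
  qed
  ultimately show ?thesis
    using det_mult[OF Lc WM_carrier[of gs x, folded n_def]] by (simp add: Wr_WM n_def)
qed

lemma deriv_const_fun: "deriv (\<lambda>_. c) = (\<lambda>_. (0::real))"
  by (rule ext, rule DERIV_imp_deriv, rule DERIV_const)

lemma higher_deriv_const: "(deriv ^^ i) (\<lambda>_. c) = (\<lambda>_. if i = 0 then c else (0::real))"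
  by (induction i) (auto simp: deriv_const_fun)

lemma Wr_const1:
  "Wr ((\<lambda>_. 1) # gs) x = Wr (map deriv gs) x"
proof -
  define A where "A = WM ((\<lambda>_. 1) # gs) x"
  define m where "m = length gs"
  have Ac: "A \<in> carrier_mat (Suc m) (Suc m)" unfolding A_def m_def using WM_carrier[of "(\<lambda>_. 1) # gs" x] by simp
  have "det A = (\<Sum>i<Suc m. A $$ (i,0) * cofactor A i 0)"
    by (rule laplace_expansion_column[OF Ac]) simp
  also have "\<dots> = (\<Sum>i<Suc m. (if i = 0 then 1 else 0) * cofactor A i 0)"
    by (rule sum.cong) (auto simp: A_def WM_index m_def higher_deriv_const)
  also have "\<dots> = (\<Sum>i<Suc m. if i = 0 then cofactor A i 0 else 0)"
    by (rule sum.cong) auto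
  also have "\<dots> = cofactor A 0 0"
    by (simp add: sum.delta)
  also have "\<dots> = det (mat_delete A 0 0)" by (simp add: cofactor_def)
  also have "mat_delete A 0 0 = WM (map deriv gs) x"
    by (rule eq_matI) (auto simp: mat_delete_def A_def WM_def m_def funpow_Suc_right simp del: funpow.simps)
  finally show ?thesis by (simp add: Wr_WM A_def)
qed

lemma higher_deriv_lin2:
  assumes "csmooth h" "csmooth k"
  shows "(deriv ^^ i) (\<lambda>t. h t + c * k t) = (\<lambda>t. (deriv ^^ i) h t + c * (deriv ^^ i) k t)"
proof (induction i)
  case 0
  then show ?case by simp
next
  case (Suc i)
  show ?case
  proof
    fix x
    have "((\<lambda>t. (deriv ^^ i) h t + c * (deriv ^^ i) k t) has_real_derivative
            (deriv ^^ Suc i) h x + c * (deriv ^^ Suc i) k x) (at x)"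
      by (intro DERIV_add DERIV_cmult csmooth_hasder assms)
    then show "(deriv ^^ Suc i) (\<lambda>t. h t + c * k t) x = (deriv ^^ Suc i) h x + c * (deriv ^^ Suc i) k x"
      using Suc by (simp add: DERIV_imp_deriv)
  qed
qed

lemma Wr_last_lin:
  assumes "csmooth h" "csmooth k"
  shows "Wr (fs @ [\<lambda>t. h t + c * k t]) x = Wr (fs @ [h]) x + c * Wr (fs @ [k]) x"
proof -
  define n where "n = length fs"
  define A where "A = (\<lambda>g. WM (fs @ [g]) x)"
  have Ac: "\<And>g. A g \<in> carrier_mat (Suc n) (Suc n)" unfolding A_def n_def using WM_carrier by (metis length_append_singleton)
  have del0: "\<And>g g' i. mat_delete (A g) i n = mat_delete (A g') i n"
    by (rule eq_matI) (auto simp: mat_delete_def A_def WM_def n_def nth_append)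
  have exp: "\<And>g. det (A g) = (\<Sum>i<Suc n. (deriv ^^ i) g x * cofactor (A g) i n)"
    by (subst laplace_expansion_column[OF Ac, of n]) (auto simp: A_def WM_index n_def nth_append intro!: sum.cong)
  have "det (A (\<lambda>t. h t + c * k t)) = (\<Sum>i<Suc n. ((deriv ^^ i) h x + c * (deriv ^^ i) k x) * cofactor (A h) i n)"
    unfolding exp higher_deriv_lin2[OF assms] cofactor_def del0[where g="\<lambda>t. h t + c * k t" and g'=h] by simp
  also have "\<dots> = det (A h) + c * det (A k)"
    unfolding exp cofactor_def del0[where g=k and g'=h] by (simp add: algebra_simps sum.distrib sum_distrib_left)
  finally show ?thesis by (simp add: A_def Wr_WM)
qed


lemma higher_deriv_sin:
  "(deriv ^^ i) (\<lambda>t. sin (a * t + b)) = (\<lambda>t. a ^ i * sin (a * t + b + real i * pi / 2))"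
proof (induction i)
  case 0
  then show ?case by simp
next
  case (Suc i)
  show ?case
  proof
    fix x
    have "((\<lambda>t. a ^ i * sin (a * t + b + real i * pi / 2)) has_real_derivative
           a ^ i * (cos (a * x + b + real i * pi / 2) * a)) (at x)"
      by (rule derivative_eq_intros refl | simp)+
    moreover have "cos (a * x + b + real i * pi / 2) = sin (a * x + b + real (Suc i) * pi / 2)"
    proof -
      have "a * x + b + real (Suc i) * pi / 2 = (a * x + b + real i * pi / 2) + pi/2"
        by (simp add: algebra_simps)
      then show ?thesis by (simp only: sin_add sin_pi_half cos_pi_half mult_1_right mult_0_right add_0_right)
    qed
    ultimately show "(deriv ^^ Suc i) (\<lambda>t. sin (a * t + b)) x = a ^ Suc i * sin (a * x + b + real (Suc i) * pi / 2)"
      using Suc by (simp add: DERIV_imp_deriv algebra_simps)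
  qed
qed

lemma csmooth_sin_lin: "csmooth (\<lambda>t. sin (a * t + b))"
proof (rule csmoothI)
  fix i x
  show "\<exists>D. ((deriv ^^ i) (\<lambda>t. sin (a * t + b)) has_real_derivative D) (at x)"
  proof -
    have "((\<lambda>t. a ^ i * sin (a * t + b + real i * pi / 2)) has_real_derivative
           a ^ i * (cos (a * x + b + real i * pi / 2) * a)) (at x)"
      by (rule derivative_eq_intros refl | simp)+
    then show ?thesis unfolding higher_deriv_sin by blast
  qed
qed

lemma csmooth_cong: "csmooth f \<Longrightarrow> f = g \<Longrightarrow> csmooth g" by simp

lemma csmooth_sin_mul: "csmooth (\<lambda>t. sin (a * t))"
  using csmooth_sin_lin[of a 0] by simp

lemma csmooth_sin: "csmooth sin"
  using csmooth_sin_lin[of 1 0] by simp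

lemma csmooth_cos_mul: "csmooth (\<lambda>t. cos (a * t))"
proof -
  have "(\<lambda>t. sin (a * t + pi/2)) = (\<lambda>t. cos (a * t))"
    by (simp add: sin_add)
  then show ?thesis using csmooth_sin_lin[of a "pi/2"] by simp
qed

lemma csmooth_const: "csmooth (\<lambda>_. c)"
proof (rule csmoothI)
  fix i x
  show "\<exists>D. ((deriv ^^ i) (\<lambda>_. c) has_real_derivative D) (at x)"
    by (cases "i = 0") (auto simp: higher_deriv_const intro!: exI[of _ 0] DERIV_const)
qed

lemma csmooth_cmult: "csmooth f \<Longrightarrow> csmooth (\<lambda>t. c * f t)"
  using csmooth_mult[OF csmooth_const] by blast

lemma csmooth_cos_pow: "csmooth (\<lambda>t. cos t ^ p)"
proof (induction p)
  case 0
  then show ?case using csmooth_const[of 1] by simp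
next
  case (Suc p)
  then show ?case using csmooth_mult[OF csmooth_cos_mul[of 1] Suc] by simp
qed

definition SS :: "nat \<Rightarrow> real \<Rightarrow> real" where "SS j t = sin (real j * t)"
definition EE :: "nat \<Rightarrow> real \<Rightarrow> real" where "EE p t = sin t * cos t ^ p"
definition CC :: "nat \<Rightarrow> real \<Rightarrow> real" where "CC p t = cos t ^ p"

lemma csmooth_SS: "csmooth (SS j)"
  using csmooth_sin_mul[of "real j"] unfolding SS_def[abs_def] .

lemma csmooth_CC: "csmooth (CC p)"
  using csmooth_cos_pow[of p] unfolding CC_def[abs_def] .

lemma csmooth_EE: "csmooth (EE p)"
  using csmooth_mult[OF csmooth_sin csmooth_cos_pow[of p]] unfolding EE_def[abs_def] .

fun P :: "nat \<Rightarrow> real poly" where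
  "P 0 = 0"
| "P (Suc 0) = 1"
| "P (Suc (Suc j)) = pCons 0 (smult 2 (P (Suc j))) - P j"

lemma P_sin: "sin (real j * t) = sin t * poly (P j) (cos t)"
proof (induction j rule: P.induct)
  case 1
  then show ?case by simp
next
  case 2
  then show ?case by simp
next
  case (3 j)
  have "sin (real (Suc (Suc j)) * t) = 2 * cos t * sin (real (Suc j) * t) - sin (real j * t)"
  proof -
    have a: "real (Suc (Suc j)) * t = real (Suc j) * t + t" and b: "real j * t = real (Suc j) * t - t"
      by (simp_all add: algebra_simps)
    have c: "sin (v + t) = 2 * cos t * sin v - sin (v - t)" for v
      by (simp add: sin_add sin_diff)
    show ?thesis by (simp only: a b c)
  qed
  then show ?case using 3 by (simp add: algebra_simps)
qed

lemma P_coeff_zero: "j \<le> p \<Longrightarrow> coeff (P j) p = 0"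
proof (induction j arbitrary: p rule: P.induct)
  case 1
  then show ?case by simp
next
  case 2
  then show ?case by (simp add: coeff_1)
next
  case (3 j)
  then show ?case by (cases p) auto
qed

lemma P_coeff_lead: "coeff (P (Suc j)) j = 2 ^ j"
proof (induction j rule: nat_less_induct)
  case (1 j)
  show ?case
  proof (cases j)
    case 0
    then show ?thesis by simp
  next
    case (Suc i)
    then show ?thesis using 1 P_coeff_zero[of i "Suc i"] by simp
  qed
qed

lemma SS_expand:
  assumes "j \<le> N"
  shows "SS j t = (\<Sum>p<N. coeff (P j) p * EE p t)"
proof -
  have "poly (P j) (cos t) = (\<Sum>p\<le>degree (P j). coeff (P j) p * cos t ^ p)"
    by (rule poly_altdef)
  also have "\<dots> = (\<Sum>p<N. coeff (P j) p * cos t ^ p)"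
  proof (cases "P j = 0")
    case True
    then show ?thesis by simp
  next
    case False
    have "degree (P j) < j"
    proof -
      have "coeff (P j) (degree (P j)) \<noteq> 0" using False by simp
      then show ?thesis using P_coeff_zero[of j "degree (P j)"] by linarith
    qed
    then have "{..degree (P j)} \<subseteq> {..<N}" using assms by auto
    then show ?thesis
      by (intro sum.mono_neutral_left) (auto simp: coeff_eq_0)
  qed
  finally show ?thesis
    unfolding SS_def EE_def P_sin by (simp add: sum_distrib_left algebra_simps)
qed


lemma stepB:
  assumes h: "csmooth h"
  shows "Wr (map SS [1..<Suc N] @ [h]) x = Wr (map EE [0..<N] @ [h]) x * (\<Prod>j<N. 2 ^ j)"
proof -
  define T :: "real mat" where "T = mat (Suc N) (Suc N) (\<lambda>(l,j). if j < N then (if l < N then coeff (P (Suc j)) l else 0) else (if l = N then 1 else 0))"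
  define fs where "fs = map EE [0..<N] @ [h]"
  define gs where "gs = map SS [1..<Suc N] @ [h]"
  have Tc: "T \<in> carrier_mat (Suc N) (Suc N)" unfolding T_def by simp
  have "Wr gs x = Wr fs x * det T"
  proof (rule Wr_transform[OF _ _ Tc])
    show "length fs = Suc N" "length gs = Suc N" unfolding fs_def gs_def by simp_all
    show "csmooth f" if "f \<in> set fs" for f using that h csmooth_EE by (auto simp: fs_def)
    fix j assume j: "j < Suc N"
    show "gs ! j = (\<lambda>t. \<Sum>l<Suc N. T $$ (l, j) * (fs ! l) t)"
    proof (cases "j < N")
      case True
      show ?thesis
      proof
        fix t
        have "gs ! j = SS (Suc j)" using True by (simp add: gs_def nth_append del: upt_Suc)
        moreover have "(\<Sum>l<Suc N. T $$ (l, j) * (fs ! l) t) = (\<Sum>l<N. coeff (P (Suc j)) l * EE l t)"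
          using True j by (simp add: T_def fs_def nth_append)
        moreover have "SS (Suc j) t = (\<Sum>l<N. coeff (P (Suc j)) l * EE l t)"
          by (rule SS_expand) (use True in simp)
        ultimately show "(gs ! j) t = (\<Sum>l<Suc N. T $$ (l, j) * (fs ! l) t)" by simp
      qed
    next
      case False
      then have jN: "j = N" using j by simp
      show ?thesis
      proof
        fix t
        have "(\<Sum>l<Suc N. T $$ (l, j) * (fs ! l) t) = h t"
          using jN by (simp add: T_def fs_def nth_append)
        then show "(gs ! j) t = (\<Sum>l<Suc N. T $$ (l, j) * (fs ! l) t)"
          using jN by (simp add: gs_def nth_append)
      qed
    qed
  qed
  moreover have "det T = (\<Prod>j<N. 2 ^ j)"
  proof -
    have "upper_triangular T"
      unfolding upper_triangular_def T_def by (auto simp: P_coeff_zero)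
    then have "det T = prod_list (diag_mat T)" using det_upper_triangular Tc by blast
    also have "\<dots> = (\<Prod>i = 0..<Suc N. T $$ (i,i))" by (simp add: prod_list_diag_prod T_def)
    also have "\<dots> = (\<Prod>j<N. 2 ^ j)"
      by (simp add: T_def P_coeff_lead lessThan_atLeast0 del: prod.op_ivl_Suc)
        (simp add: prod.atLeast0_lessThan_Suc P_coeff_lead)
    finally show ?thesis .
  qed
  ultimately show ?thesis unfolding fs_def gs_def by simp
qed

lemma diag_sum:
  fixes T :: "real mat"
  assumes "j < N" "\<And>l. l < N \<Longrightarrow> l \<noteq> j \<Longrightarrow> T $$ (l,j) = 0"
  shows "(\<Sum>l<N. T $$ (l,j) * F l) = T $$ (j,j) * F j"
proof -
  have "(\<Sum>l<N. T $$ (l,j) * F l) = (\<Sum>l<N. if l = j then T $$ (j,j) * F j else 0)"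
    by (rule sum.cong) (use assms in auto)
  also have "\<dots> = T $$ (j,j) * F j" using assms(1) by (simp add: sum.delta)
  finally show ?thesis .
qed

lemma stepE:
  assumes "N \<ge> 1"
  shows "Wr (map (\<lambda>p t. - real p * EE (p-1) t) [1..<N] @ [\<lambda>t. -2 * real m * SS m t]) x =
         Wr (map EE [0..<N-1] @ [SS m]) x * ((\<Prod>j<N-1. - real (Suc j)) * (-2 * real m))"
proof -
  define T :: "real mat" where "T = mat N N (\<lambda>(l,j). if l = j then (if j < N-1 then - real (Suc j) else -2 * real m) else 0)"
  define fs where "fs = map EE [0..<N-1] @ [SS m]"
  define gs where "gs = map (\<lambda>p t. - real p * EE (p-1) t) [1..<N] @ [\<lambda>t. -2 * real m * SS m t]"
  have Tc: "T \<in> carrier_mat N N" unfolding T_def by simp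
  have "Wr gs x = Wr fs x * det T"
  proof (rule Wr_transform[OF _ _ Tc])
    show "length fs = N" "length gs = N" unfolding fs_def gs_def using assms by simp_all
    show "csmooth f" if "f \<in> set fs" for f using that csmooth_SS csmooth_EE by (auto simp: fs_def)
    fix j assume j: "j < N"
    show "gs ! j = (\<lambda>t. \<Sum>l<N. T $$ (l, j) * (fs ! l) t)"
    proof
      fix t
      have "(\<Sum>l<N. T $$ (l, j) * (fs ! l) t) = T $$ (j,j) * (fs ! j) t"
        by (rule diag_sum) (use j in \<open>auto simp: T_def\<close>)
      then show "(gs ! j) t = (\<Sum>l<N. T $$ (l, j) * (fs ! l) t)"
        using j assms by (cases "j < N - 1") (auto simp: T_def fs_def gs_def nth_append algebra_simps)
    qed
  qed
  moreover have "det T = (\<Prod>j<N-1. - real (Suc j)) * (-2 * real m)"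
  proof -
    have "upper_triangular T"
      unfolding upper_triangular_def T_def by auto
    then have "det T = prod_list (diag_mat T)" using det_upper_triangular Tc by blast
    also have "\<dots> = (\<Prod>i = 0..<N. T $$ (i,i))" by (simp add: prod_list_diag_prod T_def)
    also have "\<dots> = (\<Prod>i = 0..<Suc (N-1). T $$ (i,i))" using assms by simp
    also have "\<dots> = (\<Prod>j<N-1. - real (Suc j)) * (-2 * real m)"
      unfolding prod.atLeast0_lessThan_Suc using assms
      by (simp add: T_def lessThan_atLeast0)
    finally show ?thesis .
  qed
  ultimately show ?thesis unfolding fs_def gs_def by simp
qed


lemma Wr_single: "Wr [f] x = f x"
proof -
  define A where "A = WM [f] x"
  have Ac: "A \<in> carrier_mat 1 1" unfolding A_def using WM_carrier[of "[f]" x] by simp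
  have "upper_triangular A" unfolding upper_triangular_def using Ac by auto
  then have "det A = prod_list (diag_mat A)" using det_upper_triangular Ac by blast
  also have "\<dots> = f x" using Ac by (simp add: prod_list_diag_prod A_def WM_index)
  finally show ?thesis by (simp add: Wr_WM A_def)
qed

lemma SSf: "SS = (\<lambda>j t. sin (real j * t))"
  by (intro ext) (simp add: SS_def)

lemma W_eq: "n \<ge> 1 \<Longrightarrow> W n k x = Wr (map SS [1..<n] @ [SS (n + k)]) x"
proof (cases "n = 1")
  case True
  then show ?thesis by (simp add: W_def Wr_single SS_def algebra_simps)
next
  case False
  then show ?thesis by (simp add: W_def SSf)
qed

lemma deriv_CC: "p \<ge> 1 \<Longrightarrow> deriv (CC p) = (\<lambda>t. - real p * EE (p-1) t)"
proof (rule ext)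
  fix t assume p: "p \<ge> 1"
  have "((\<lambda>t. cos t ^ p) has_real_derivative real p * cos t ^ (p - 1) * (- sin t)) (at t)"
    by (rule derivative_eq_intros refl | simp)+
  then show "deriv (CC p) t = - real p * EE (p-1) t"
    unfolding CC_def[abs_def] EE_def by (simp add: DERIV_imp_deriv algebra_simps)
qed

lemma deriv_g2: fixes a :: real shows "deriv (\<lambda>t. 2 * cos (a * t)) = (\<lambda>t. -2 * a * sin (a * t))"
proof (rule ext)
  fix t
  have "((\<lambda>t. 2 * cos (a * t)) has_real_derivative 2 * (- sin (a * t) * a)) (at t)"
    by (rule derivative_eq_intros refl | simp)+
  then show "deriv (\<lambda>t. 2 * cos (a * t)) t = -2 * a * sin (a * t)"
    by (simp add: DERIV_imp_deriv algebra_simps)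
qed

lemma prod_neg: "(\<Prod>j<M. - real (Suc j)) = (-1) ^ M * fact M"
  by (induction M) (simp_all add: algebra_simps)

theorem lemma2:
  fixes n k :: nat and x :: real
  assumes "n \<ge> 2"
  shows "W n (k + 2) x = W n k x + (-2) ^ (n - 1) * real (n + k + 1) * fact (n - 2) * (sin x) ^ n * W (n - 1) (k + 2) x"
proof -
  obtain M where nM: "n = Suc (Suc M)" using assms by (metis add_2_eq_Suc le_Suc_ex)
  define N where "N = Suc M"
  have nN: "n = Suc N" and N1: "N \<ge> 1" unfolding N_def nM by simp_all
  define m where "m = n + k + 1"
  define h2 where "h2 = (\<lambda>t. sin t * (2 * cos (real m * t)))"
  define g2 where "g2 = (\<lambda>t. 2 * cos (real m * t))"
  have g2s: "csmooth g2" unfolding g2_def by (rule csmooth_cmult[OF csmooth_cos_mul])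
  have h2s: "csmooth h2" unfolding h2_def using csmooth_mult[OF csmooth_sin g2s] by (simp add: g2_def)
  have eq1: "SS (n + (k + 2)) = (\<lambda>t. SS (n + k) t + 1 * h2 t)"
  proof
    fix t
    have a: "real (n + (k + 2)) * t = real m * t + t" and b: "real (n + k) * t = real m * t - t"
      by (simp_all add: m_def algebra_simps)
    have c: "sin (v + t) = sin (v - t) + sin t * (2 * cos v)" for v
      by (simp add: sin_add sin_diff algebra_simps)
    show "SS (n + (k + 2)) t = SS (n + k) t + 1 * h2 t"
      unfolding SS_def h2_def a b c by simp
  qed
  have "W n (k + 2) x = Wr (map SS [1..<n] @ [SS (n + (k + 2))]) x"
    using W_eq assms by simp
  also have "\<dots> = W n k x + Wr (map SS [1..<n] @ [h2]) x"
    unfolding eq1 Wr_last_lin[OF csmooth_SS h2s] using W_eq assms by simp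
  finally have s1: "W n (k + 2) x = W n k x + Wr (map SS [1..<Suc N] @ [h2]) x" by (simp add: nN)
  have s2: "Wr (map SS [1..<Suc N] @ [h2]) x = Wr (map EE [0..<N] @ [h2]) x * (\<Prod>j<N. 2 ^ j)"
    by (rule stepB[OF h2s])
  have eqm: "map EE [0..<N] @ [h2] = map (\<lambda>g t. sin t * g t) (map CC [0..<N] @ [g2])"
    by (simp add: EE_def[abs_def] CC_def[abs_def] comp_def h2_def g2_def)
  have "Wr (map (\<lambda>g t. sin t * g t) (map CC [0..<N] @ [g2])) x = sin x ^ length (map CC [0..<N] @ [g2]) * Wr (map CC [0..<N] @ [g2]) x"
    by (rule Wr_mult[OF csmooth_sin]) (use csmooth_CC g2s in auto)
  then have s3: "Wr (map EE [0..<N] @ [h2]) x = sin x ^ Suc N * Wr (map CC [0..<N] @ [g2]) x"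
    unfolding eqm by simp
  have eqc: "map CC [0..<N] @ [g2] = (\<lambda>_. 1) # (map CC [1..<N] @ [g2])"
    using N1 by (simp add: upt_conv_Cons CC_def[abs_def])
  have dm: "map deriv (map CC [1..<N]) = map (\<lambda>p t. - real p * EE (p-1) t) [1..<N]"
    unfolding map_map by (rule map_cong) (auto simp: deriv_CC)
  have dg: "deriv g2 = (\<lambda>t. -2 * real m * SS m t)"
    by (simp add: g2_def deriv_g2 SS_def[abs_def])
  have "Wr (map CC [0..<N] @ [g2]) x = Wr ((\<lambda>_. 1) # (map CC [1..<N] @ [g2])) x"
    by (simp only: eqc)
  also have "\<dots> = Wr (map deriv (map CC [1..<N] @ [g2])) x" by (rule Wr_const1)
  also have "map deriv (map CC [1..<N] @ [g2]) = map (\<lambda>p t. - real p * EE (p-1) t) [1..<N] @ [\<lambda>t. -2 * real m * SS m t]"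
    by (simp only: map_append dm dg list.map)
  finally have s4: "Wr (map CC [0..<N] @ [g2]) x = Wr (map (\<lambda>p t. - real p * EE (p-1) t) [1..<N] @ [\<lambda>t. -2 * real m * SS m t]) x" .
  note s5 = stepE[OF N1, of m x]
  have "W (n - 1) (k + 2) x = Wr (map SS [1..<Suc (N - 1)] @ [SS m]) x"
    using W_eq[of "n - 1" "k + 2" x] N1 nN by (simp add: m_def)
  also have "\<dots> = Wr (map EE [0..<N-1] @ [SS m]) x * (\<Prod>j<N-1. 2 ^ j)"
    by (rule stepB[OF csmooth_SS])
  finally have s6: "W (n - 1) (k + 2) x = Wr (map EE [0..<N-1] @ [SS m]) x * (\<Prod>j<N-1. 2 ^ j)" .
  define X where "X = Wr (map EE [0..<N-1] @ [SS m]) x"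
  have "W n (k + 2) x = W n k x + X * ((\<Prod>j<M. - real (Suc j)) * (-2 * real m)) * sin x ^ Suc N * (\<Prod>j<N. 2 ^ j)"
    using s1 s2 s3 s4 s5 by (simp add: X_def N_def)
  also have "\<dots> = W n k x + (-2) ^ (n - 1) * real (n + k + 1) * fact (n - 2) * (sin x) ^ n * W (n - 1) (k + 2) x"
  proof -
    have "(-2::real) ^ (n - 1) = (-2) * ((-1) ^ M * 2 ^ M)"
      by (simp add: nM power_mult_distrib[symmetric])
    then show ?thesis
      unfolding s6 prod_neg using nN
      by (simp add: X_def N_def nM m_def algebra_simps)
  qed
  finally show ?thesis .
qed

end
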